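(* Let $s>2$, let $\gamma$ be a fixed constant (the ratio of specific heats, typically $1<\gamma<3$), and let $\mathbb{T}=\mathbb{R}/2\pi\mathbb{Z}$. Consider the two-dimensional compressible gas dynamics system for $U=(\rho,u,v,h)$ on $\mathbb{T}^2$: \begin{align*} \rho_t +u\rho_x+v\rho_y+\rho(u_x+v_y)&=0, \\ u_t +uu_x+ vu_y+ h_x+ \tfrac{h}{\rho}\rho_x&=0, \\ v_t +uv_x+ vv_y+ h_y+ \tfrac{h}{\rho}\rho_y&=0, \\ h_t+uh_x+ vh_y+(\gamma -1) h(u_x+v_y)&=0. \end{align*} Then the data-to-solution map $U(0)\mapsto U(t)$ for this system is not uniformly continuous from any bounded subset of $(H^s(\mathbb{T}^2))^4$ into $C([0,T];(H^s(\mathbb{T}^2))^4)$.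
   Context: Here $\rho$ is the density, $(u,v)$ the velocity, and $h=p/\rho$ (with $p$ the pressure). Solutions are classical solutions taking values in a compact subset of the state space $G=\{(\rho,u,v,h):\rho>0,\ h>0\}$, where the system is symmetrizable hyperbolic; for $s>2$ the Cauchy problem is locally well posed in $(H^s(\mathbb{T}^2))^4$, and $T>0$ denotes a time of existence of the solutions considered. The Sobolev norm is $\|f\|_s^2=\langle \Lambda^s f,\Lambda^s f\rangle$ with $\Lambda^s=(1-\Delta)^{s/2}$ and $\langle\cdot,\cdot\rangle$ the $L^2(\mathbb{T}^2)$ inner product. *)

theory Defs
  imports "HOL-Analysis.Analysis"
begin

text \<open>Space-time scalar fields: functions of (t,x,y); spatial fields: functions of (x,y),
  2pi-periodic in x and y, i.e. functions on the torus T^2.\<close>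

type_synonym sfun = "real \<times> real \<times> real \<Rightarrow> real"
type_synonym xfun = "real \<times> real \<Rightarrow> real"
type_synonym state = "xfun \<times> xfun \<times> xfun \<times> xfun"

definition fcoef :: "xfun \<Rightarrow> int \<times> int \<Rightarrow> complex" where
  "fcoef g k = integral (cbox (0,0) (2*pi, 2*pi))
      (\<lambda>(x,y). complex_of_real (g (x,y)) * cis (- (of_int (fst k) * x + of_int (snd k) * y)))
      / complex_of_real (4 * pi^2)"

definition sob_weight :: "real \<Rightarrow> int \<times> int \<Rightarrow> real" where
  "sob_weight s k = (1 + (of_int (fst k))^2 + (of_int (snd k))^2) powr s"

text \<open>g in H^s(T^2): the Fourier multiplier Lambda^s g = (1-Delta)^(s/2) g lies in L^2.\<close>
definition in_Hs :: "real \<Rightarrow> xfun \<Rightarrow> bool" where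
  "in_Hs s g \<longleftrightarrow> (\<lambda>k. sob_weight s k * (cmod (fcoef g k))^2) summable_on UNIV"

text \<open>Squared Sobolev norm <Lambda^s g, Lambda^s g> (L^2 inner product on T^2, via Parseval).\<close>
definition Hs_sq :: "real \<Rightarrow> xfun \<Rightarrow> real" where
  "Hs_sq s g = 4 * pi^2 * (\<Sum>\<^sub>\<infinity>k. sob_weight s k * (cmod (fcoef g k))^2)"

definition Hs4 :: "real \<Rightarrow> state \<Rightarrow> real" where
  "Hs4 s U = (case U of (a,b,c,d) \<Rightarrow> sqrt (Hs_sq s a + Hs_sq s b + Hs_sq s c + Hs_sq s d))"

definition in_Hs4 :: "real \<Rightarrow> state \<Rightarrow> bool" where
  "in_Hs4 s U = (case U of (a,b,c,d) \<Rightarrow> in_Hs s a \<and> in_Hs s b \<and> in_Hs s c \<and> in_Hs s d)"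

definition sub4 :: "state \<Rightarrow> state \<Rightarrow> state" where
  "sub4 U V = (case U of (a,b,c,d) \<Rightarrow> case V of (a',b',c',d') \<Rightarrow>
      (\<lambda>p. a p - a' p, \<lambda>p. b p - b' p, \<lambda>p. c p - c' p, \<lambda>p. d p - d' p))"

definition slice :: "sfun \<Rightarrow> real \<Rightarrow> xfun" where
  "slice f t = (\<lambda>(x,y). f (t,x,y))"

definition state_at :: "sfun \<times> sfun \<times> sfun \<times> sfun \<Rightarrow> real \<Rightarrow> state" where
  "state_at U t = (case U of (r,a,b,c) \<Rightarrow> (slice r t, slice a t, slice b t, slice c t))"

definition pd3 :: "(real \<times> real \<times> real) set \<Rightarrow> sfun \<Rightarrow> sfun \<Rightarrow> sfun \<Rightarrow> sfun \<Rightarrow> bool" where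
  "pd3 S f ft fx fy \<longleftrightarrow> continuous_on S ft \<and> continuous_on S fx \<and> continuous_on S fy \<and>
     (\<forall>p\<in>S. (f has_derivative (\<lambda>(a,b,c). ft p * a + fx p * b + fy p * c)) (at p within S))"

definition periodic2 :: "real \<Rightarrow> sfun \<Rightarrow> bool" where
  "periodic2 T f \<longleftrightarrow> (\<forall>t\<in>{0..T}. \<forall>x y. f (t, x + 2*pi, y) = f (t,x,y) \<and> f (t, x, y + 2*pi) = f (t,x,y))"

definition G_space :: "(real \<times> real \<times> real \<times> real) set" where
  "G_space = {(r,a,b,c). r > 0 \<and> c > 0}"

definition gas_sol :: "real \<Rightarrow> real \<Rightarrow> real \<Rightarrow> sfun \<times> sfun \<times> sfun \<times> sfun \<Rightarrow> bool" where
  "gas_sol s \<gamma> T U \<longleftrightarrow> (case U of (\<rho>,u,v,h) \<Rightarrow>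
     (let S = {0..T} \<times> (UNIV :: (real \<times> real) set) in
       periodic2 T \<rho> \<and> periodic2 T u \<and> periodic2 T v \<and> periodic2 T h \<and>
       (\<exists>\<rho>t \<rho>x \<rho>y ut ux uy vt vx vy ht hx hy.
          pd3 S \<rho> \<rho>t \<rho>x \<rho>y \<and> pd3 S u ut ux uy \<and> pd3 S v vt vx vy \<and> pd3 S h ht hx hy \<and>
          (\<forall>p\<in>S.
             \<rho>t p + u p * \<rho>x p + v p * \<rho>y p + \<rho> p * (ux p + vy p) = 0 \<and>
             ut p + u p * ux p + v p * uy p + hx p + h p / \<rho> p * \<rho>x p = 0 \<and>
             vt p + u p * vx p + v p * vy p + hy p + h p / \<rho> p * \<rho>y p = 0 \<and>
             ht p + u p * hx p + v p * hy p + (\<gamma> - 1) * h p * (ux p + vy p) = 0)) \<and>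
       (\<exists>K. compact K \<and> K \<subseteq> G_space \<and> (\<forall>p\<in>S. (\<rho> p, u p, v p, h p) \<in> K)) \<and>
       (\<forall>t\<in>{0..T}. in_Hs4 s (state_at U t)) \<and>
       (\<forall>t\<in>{0..T}. \<forall>e>0. \<exists>d>0. \<forall>t'\<in>{0..T}. \<bar>t' - t\<bar> < d \<longrightarrow>
           Hs4 s (sub4 (state_at U t') (state_at U t)) < e)))"

end

theory Submission
  imports Defs
begin

lemma int_cis1:
  fixes j :: int
  shows "integral {0..2*pi} (\<lambda>x. cis (of_int j * x)) = (if j = 0 then 2*pi else 0)"
proof (cases "j = 0")
  case True then show ?thesis by (simp add: scaleR_conv_of_real)
next
  case False
  define F where "F = (\<lambda>x::real. cis (of_int j * x) / (\<i> * of_int j))"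
  have d: "(F has_vector_derivative cis (of_int j * x)) (at x within {0..2*pi})" for x
    unfolding F_def has_vector_derivative_def
    by (rule derivative_eq_intros refl)+ (use False in \<open>auto simp: field_simps scaleR_conv_of_real\<close>)
  have "((\<lambda>x. cis (of_int j * x)) has_integral (F (2*pi) - F 0)) {0..2*pi}"
    by (rule fundamental_theorem_of_calculus) (use d in auto)
  moreover have "cis (of_int j * (2*pi)) = 1"
    using cis_multiple_2pi[of "of_int j"] by (simp add: mult.commute)
  ultimately show ?thesis using False by (simp add: F_def integral_unique)
qed

lemma int_cis2:
  fixes j l :: int
  shows "integral (cbox (0,0) (2*pi,2*pi)) (\<lambda>(x,y). cis (of_int j * x + of_int l * y))
     = (if j = 0 \<and> l = 0 then complex_of_real (4*pi^2) else 0)"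
proof -
  have c: "continuous_on (cbox (0,0) (2*pi,2*pi)) (\<lambda>(x::real,y::real). cis (of_int j * x + of_int l * y))"
    by (auto intro!: continuous_intros simp: case_prod_unfold)
  have "integral (cbox (0,0) (2*pi,2*pi)) (\<lambda>(x,y). cis (of_int j * x + of_int l * y))
     = integral {0..2*pi} (\<lambda>x. integral {0..2*pi} (\<lambda>y. cis (of_int j * x) * cis (of_int l * y)))"
    using integral_prod_continuous[OF c] by (simp add: cis_mult)
  also have "\<dots> = integral {0..2*pi} (\<lambda>x. cis (of_int j * x) * integral {0..2*pi} (\<lambda>y. cis (of_int l * y)))"
    by (simp add: integral_mult_right)
  also have "\<dots> = integral {0..2*pi} (\<lambda>x. cis (of_int j * x)) * integral {0..2*pi} (\<lambda>y. cis (of_int l * y))"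
    by (simp add: integral_mult_left)
  also have "\<dots> = (if j = 0 \<and> l = 0 then complex_of_real (4*pi^2) else 0)"
    by (simp add: int_cis1 power2_eq_square)
  finally show ?thesis .
qed

lemma trig_pt:
  fixes n :: nat and k1 k2 :: int
  shows "complex_of_real (A + B * cos (real n * x) + C * sin (real n * x)) * cis (- (of_int k1 * x + of_int k2 * y))
     = complex_of_real A * cis (of_int (-k1) * x + of_int (-k2) * y)
     + Complex (B/2) (-C/2) * cis (of_int (int n - k1) * x + of_int (-k2) * y)
     + Complex (B/2) (C/2) * cis (of_int (- int n - k1) * x + of_int (-k2) * y)"
proof -
  have e1: "cis (of_int (int n - k1) * x + of_int (-k2) * y) = cis (real n * x) * cis (- (of_int k1 * x + of_int k2 * y))"
    unfolding cis_mult by (rule arg_cong[where f=cis]) (simp add: algebra_simps)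
  have e2: "cis (of_int (- int n - k1) * x + of_int (-k2) * y) = cis (- real n * x) * cis (- (of_int k1 * x + of_int k2 * y))"
    unfolding cis_mult by (rule arg_cong[where f=cis]) (simp add: algebra_simps)
  have e0: "cis (of_int (-k1) * x + of_int (-k2) * y) = cis (- (of_int k1 * x + of_int k2 * y))"
    by (simp add: algebra_simps)
  have f: "complex_of_real (A + B * cos (real n * x) + C * sin (real n * x)) =
      complex_of_real A + Complex (B/2) (-C/2) * cis (real n * x) + Complex (B/2) (C/2) * cis (- real n * x)"
    by (simp add: complex_eq_iff)
  show ?thesis unfolding e0 e1 e2 f by (simp add: algebra_simps)
qed

lemma fcoef_trig:
  fixes n :: nat assumes "n > 0"
  shows "fcoef (\<lambda>(x,y). A + B * cos (real n * x) + C * sin (real n * x)) k =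
     (if k = (0,0) then complex_of_real A else 0)
   + (if k = (int n, 0) then Complex (B/2) (-C/2) else 0)
   + (if k = (- int n, 0) then Complex (B/2) (C/2) else 0)"
proof -
  obtain k1 k2 where k: "k = (k1,k2)" by (cases k)
  define I where "I = (\<lambda>j l. integral (cbox (0,0) (2*pi,2*pi)) (\<lambda>(x::real,y::real). cis (of_int j * x + of_int l * y)))"
  have ci: "(\<lambda>(x::real,y::real). cis (of_int j * x + of_int l * y)) integrable_on cbox (0,0) (2*pi,2*pi)" for j l
    by (rule integrable_continuous) (auto intro!: continuous_intros simp: case_prod_unfold)
  have cmi: "(\<lambda>p. c * (\<lambda>(x::real,y::real). cis (of_int j * x + of_int l * y)) p) integrable_on cbox (0,0) (2*pi,2*pi)" for c j l
    using integrable_on_mult_right[OF ci[of j l], of c] by simp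
  have "fcoef (\<lambda>(x,y). A + B * cos (real n * x) + C * sin (real n * x)) k
     = integral (cbox (0,0) (2*pi,2*pi)) (\<lambda>p.
          complex_of_real A * (\<lambda>(x,y). cis (of_int (-k1) * x + of_int (-k2) * y)) p
        + Complex (B/2) (-C/2) * (\<lambda>(x,y). cis (of_int (int n - k1) * x + of_int (-k2) * y)) p
        + Complex (B/2) (C/2) * (\<lambda>(x,y). cis (of_int (- int n - k1) * x + of_int (-k2) * y)) p)
       / complex_of_real (4 * pi^2)"
    unfolding fcoef_def k
    by (rule arg_cong2[where f="(/)"], rule arg_cong[where f="integral _"], rule ext,
        clarsimp simp only: prod.case fst_conv snd_conv trig_pt, rule refl)
  also have "\<dots> = (complex_of_real A * I (-k1) (-k2) + Complex (B/2) (-C/2) * I (int n - k1) (-k2)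
        + Complex (B/2) (C/2) * I (- int n - k1) (-k2)) / complex_of_real (4 * pi^2)"
    unfolding I_def
    by (subst integral_add, intro integrable_add cmi, rule cmi, subst integral_add, (rule cmi)+)
       (simp add: integral_mult_right)
  also have "\<dots> = (if k = (0,0) then complex_of_real A else 0)
   + (if k = (int n, 0) then Complex (B/2) (-C/2) else 0)
   + (if k = (- int n, 0) then Complex (B/2) (C/2) else 0)"
    unfolding I_def int_cis2 k using assms by (auto simp: field_simps)
  finally show ?thesis .
qed

lemma Hs_trig:
  fixes n :: nat assumes n: "n > 0"
  shows "in_Hs s (\<lambda>(x,y). A + B * cos (real n * x) + C * sin (real n * x)) \<and>
         Hs_sq s (\<lambda>(x,y). A + B * cos (real n * x) + C * sin (real n * x)) =
           4*pi^2 * (A^2 + (1 + real n ^ 2) powr s * (B^2 + C^2) / 2)"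
proof -
  define g where "g = (\<lambda>(x::real,y::real). A + B * cos (real n * x) + C * sin (real n * x))"
  define f where "f = (\<lambda>k. sob_weight s k * (cmod (fcoef g k))^2)"
  define F where "F = {(0::int,0::int), (int n, 0), (- int n, 0)}"
  have fz: "f k = 0" if "k \<in> UNIV - F" for k
    using that unfolding f_def g_def fcoef_trig[OF n] F_def by auto
  have cm: "(cmod (Complex a b))^2 = a^2 + b^2" for a b
    by (simp add: cmod_def)
  have sumF: "(\<Sum>k\<in>F. f k) = A^2 + (1 + real n ^ 2) powr s * (B^2 + C^2) / 2"
    using n unfolding F_def f_def g_def fcoef_trig[OF n]
    by (simp add: sob_weight_def cm power_divide field_simps)
  have hs: "(f has_sum (\<Sum>k\<in>F. f k)) UNIV"
    by (rule has_sum_finite_neutralI) (use fz in \<open>auto simp: F_def\<close>)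
  show ?thesis
    using hs has_sum_imp_summable[OF hs] infsumI[OF hs] sumF
    unfolding in_Hs_def Hs_sq_def f_def g_def by simp
qed

definition trig :: "nat \<Rightarrow> real \<Rightarrow> real \<Rightarrow> real \<Rightarrow> xfun" where
  "trig n A B C = (\<lambda>(x,y). A + B * cos (real n * x) + C * sin (real n * x))"

definition Ht :: "real \<Rightarrow> nat \<Rightarrow> real \<Rightarrow> real \<Rightarrow> real \<Rightarrow> real" where
  "Ht s n A B C = 4*pi^2 * (A^2 + (1 + real n ^ 2) powr s * (B^2 + C^2) / 2)"

lemma Ht_nonneg: "Ht s n A B C \<ge> 0"
  unfolding Ht_def by (intro mult_nonneg_nonneg add_nonneg_nonneg divide_nonneg_nonneg) auto

lemma Hs_trig': "n > 0 \<Longrightarrow> in_Hs s (trig n A B C) \<and> Hs_sq s (trig n A B C) = Ht s n A B C"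
  unfolding trig_def Ht_def by (rule Hs_trig)

lemma sub4_trig:
  "sub4 (trig n A1 B1 C1, trig n A2 B2 C2, trig n A3 B3 C3, trig n A4 B4 C4)
        (trig n A1' B1' C1', trig n A2' B2' C2', trig n A3' B3' C3', trig n A4' B4' C4')
   = (trig n (A1-A1') (B1-B1') (C1-C1'), trig n (A2-A2') (B2-B2') (C2-C2'),
      trig n (A3-A3') (B3-B3') (C3-C3'), trig n (A4-A4') (B4-B4') (C4-C4'))"
  unfolding sub4_def trig_def by (auto simp: fun_eq_iff algebra_simps)

lemma Hs4_trig:
  assumes "n > 0"
  shows "Hs4 s (trig n A1 B1 C1, trig n A2 B2 C2, trig n A3 B3 C3, trig n A4 B4 C4)
     = sqrt (Ht s n A1 B1 C1 + Ht s n A2 B2 C2 + Ht s n A3 B3 C3 + Ht s n A4 B4 C4)"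
    and "in_Hs4 s (trig n A1 B1 C1, trig n A2 B2 C2, trig n A3 B3 C3, trig n A4 B4 C4)"
  using Hs_trig'[OF assms] unfolding Hs4_def in_Hs4_def by auto

definition W :: "nat \<Rightarrow> real \<Rightarrow> real \<Rightarrow> sfun \<times> sfun \<times> sfun \<times> sfun" where
  "W n e c = ((\<lambda>p. 1), (\<lambda>p. c), (\<lambda>p. e * sin (real n * (fst (snd p) - c * fst p))), (\<lambda>p. 1))"

lemma state_W:
  "state_at (W n e c) t = (trig n 1 0 0, trig n c 0 0,
      trig n 0 (- (e * sin (real n * c * t))) (e * cos (real n * c * t)), trig n 1 0 0)"
  unfolding state_at_def W_def slice_def trig_def
  by (auto simp: fun_eq_iff sin_diff algebra_simps)

lemma pd3_const: "pd3 S (\<lambda>p. k) (\<lambda>p. 0) (\<lambda>p. 0) (\<lambda>p. 0)"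
proof -
  have "(\<lambda>(a::real,b::real,c::real). 0*a+0*b+0*c) = (\<lambda>_. 0::real)" by auto
  then show ?thesis unfolding pd3_def by (auto intro: has_derivative_const continuous_intros)
qed

lemma pd3_W:
  "pd3 S (\<lambda>p. e * sin (real n * (fst (snd p) - c * fst p)))
     (\<lambda>p. - (e * real n * c * cos (real n * (fst (snd p) - c * fst p))))
     (\<lambda>p. e * real n * cos (real n * (fst (snd p) - c * fst p))) (\<lambda>p. 0)"
  unfolding pd3_def
proof (intro conjI ballI)
  fix p :: "real \<times> real \<times> real"
  show "((\<lambda>p. e * sin (real n * (fst (snd p) - c * fst p))) has_derivative
      (\<lambda>(a, b, d). - (e * real n * c * cos (real n * (fst (snd p) - c * fst p))) * a +
          e * real n * cos (real n * (fst (snd p) - c * fst p)) * b + 0 * d)) (at p within S)"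
    by (rule has_derivative_eq_rhs, (rule derivative_eq_intros refl | rule has_derivative_fst has_derivative_snd has_derivative_ident)+)
       (auto simp: fun_eq_iff algebra_simps)
qed (auto intro!: continuous_intros)

lemma sin_per: "sin (real n * (x + 2 * pi - y)) = sin (real n * (x - y))"
proof -
  have "real n * (x + 2 * pi - y) = real n * (x - y) + (2*pi) * of_int (int n)"
    by (simp add: algebra_simps)
  then show ?thesis by (simp only: sin_add cos_int_2pin sin_int_2pin)
qed


lemma gas_W:
  assumes n: "n > 0" and e: "\<bar>e\<bar> \<le> 1" and c: "\<bar>c\<bar> \<le> 1"
  shows "gas_sol s \<gamma> T (W n e c)"
proof -
  define S where "S = {0..T} \<times> (UNIV :: (real \<times> real) set)"
  define K where "K = ({1} \<times> cball 0 1 \<times> cball 0 1 \<times> {1} :: (real \<times> real \<times> real \<times> real) set)"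
  have K: "compact K \<and> K \<subseteq> G_space"
    unfolding K_def G_space_def by (auto intro!: compact_Times) 
  have sb: "\<bar>e * sin y\<bar> \<le> 1" for y
    using e abs_sin_le_one[of y] by (simp add: abs_mult mult_le_one)
  have inK: "(1, c, e * sin (real n * (fst (snd p) - c * fst p)), 1) \<in> K" for p
    unfolding K_def using c sb by auto
  have per: "periodic2 T (\<lambda>p. e * sin (real n * (fst (snd p) - c * fst p)))"
    unfolding periodic2_def by (simp add: sin_per)
  have cont: "\<exists>d>0. \<forall>t'\<in>{0..T}. \<bar>t' - t\<bar> < d \<longrightarrow>
           Hs4 s (sub4 (state_at (W n e c) t') (state_at (W n e c) t)) < \<epsilon>"
    if "\<epsilon> > 0" for t \<epsilon>
  proof -
    define \<phi> where "\<phi> = (\<lambda>t'. sqrt (Ht s n (1-1) (0-0) (0-0) + Ht s n (c-c) (0-0) (0-0) +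
        Ht s n (0-0) (- (e * sin (real n * c * t')) - - (e * sin (real n * c * t)))
                   (e * cos (real n * c * t') - e * cos (real n * c * t)) + Ht s n (1-1) (0-0) (0-0)))"
    have eq: "Hs4 s (sub4 (state_at (W n e c) t') (state_at (W n e c) t)) = \<phi> t'" for t'
      unfolding state_W sub4_trig \<phi>_def Hs4_trig(1)[OF n] by (rule refl)
    have "continuous_on UNIV \<phi>" unfolding \<phi>_def Ht_def by (auto intro!: continuous_intros)
    then have "isCont \<phi> t" by (simp add: continuous_on_eq_continuous_at)
    moreover have "\<phi> t = 0" unfolding \<phi>_def Ht_def by simp
    ultimately have "\<phi> \<midarrow>t\<rightarrow> 0" by (metis isCont_def)
    then obtain d where d: "d > 0" "\<And>x. x \<noteq> t \<and> norm (x - t) < d \<Longrightarrow> norm (\<phi> x - 0) < \<epsilon>"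
      using \<open>\<epsilon> > 0\<close> unfolding LIM_eq by blast
    show ?thesis
    proof (intro exI[of _ d] conjI ballI impI)
      fix t' assume "t' \<in> {0..T}" "\<bar>t' - t\<bar> < d"
      show "Hs4 s (sub4 (state_at (W n e c) t') (state_at (W n e c) t)) < \<epsilon>"
      proof (cases "t' = t")
        case True then show ?thesis using \<open>\<phi> t = 0\<close> \<open>\<epsilon> > 0\<close> eq by simp
      next
        case False
        have "\<phi> t' \<ge> 0" unfolding \<phi>_def by (simp add: Ht_nonneg)
        then show ?thesis using d(2)[of t'] False \<open>\<bar>t' - t\<bar> < d\<close> eq by simp
      qed
    qed (rule d(1))
  qed
  show ?thesis
    unfolding gas_sol_def W_def Let_def prod.case
  proof (intro conjI)
    show "periodic2 T (\<lambda>p. 1)" "periodic2 T (\<lambda>p. 1)" "periodic2 T (\<lambda>p. c)" unfolding periodic2_def by auto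
    show "periodic2 T (\<lambda>p. e * sin (real n * (fst (snd p) - c * fst p)))" by (rule per)
    show "\<exists>K. compact K \<and> K \<subseteq> G_space \<and> (\<forall>p\<in>{0..T} \<times> UNIV. (1, c, e * sin (real n * (fst (snd p) - c * fst p)), 1) \<in> K)"
      using K inK by blast
    show "\<forall>t\<in>{0..T}. in_Hs4 s (state_at ((\<lambda>p. 1), (\<lambda>p. c), (\<lambda>p. e * sin (real n * (fst (snd p) - c * fst p))), (\<lambda>p. 1)) t)"
      using state_W[of n e c] Hs4_trig(2)[OF n] unfolding W_def by simp
    show "\<forall>t\<in>{0..T}. \<forall>\<epsilon>>0. \<exists>d>0. \<forall>t'\<in>{0..T}. \<bar>t' - t\<bar> < d \<longrightarrow>
           Hs4 s (sub4 (state_at ((\<lambda>p. 1), (\<lambda>p. c), (\<lambda>p. e * sin (real n * (fst (snd p) - c * fst p))), (\<lambda>p. 1)) t')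
                       (state_at ((\<lambda>p. 1), (\<lambda>p. c), (\<lambda>p. e * sin (real n * (fst (snd p) - c * fst p))), (\<lambda>p. 1)) t)) < \<epsilon>"
      using cont unfolding W_def by blast
    show "\<exists>\<rho>t \<rho>x \<rho>y ut ux uy vt vx vy ht hx hy. pd3 ({0..T} \<times> UNIV) (\<lambda>p. 1) \<rho>t \<rho>x \<rho>y \<and>
        pd3 ({0..T} \<times> UNIV) (\<lambda>p. c) ut ux uy \<and>
        pd3 ({0..T} \<times> UNIV) (\<lambda>p. e * sin (real n * (fst (snd p) - c * fst p))) vt vx vy \<and>
        pd3 ({0..T} \<times> UNIV) (\<lambda>p. 1) ht hx hy \<and>
        (\<forall>p\<in>{0..T} \<times> UNIV.
            \<rho>t p + c * \<rho>x p + e * sin (real n * (fst (snd p) - c * fst p)) * \<rho>y p + 1 * (ux p + vy p) = 0 \<and>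
            ut p + c * ux p + e * sin (real n * (fst (snd p) - c * fst p)) * uy p + hx p + 1 / 1 * \<rho>x p = 0 \<and>
            vt p + c * vx p + e * sin (real n * (fst (snd p) - c * fst p)) * vy p + hy p + 1 / 1 * \<rho>y p = 0 \<and>
            ht p + c * hx p + e * sin (real n * (fst (snd p) - c * fst p)) * hy p + (\<gamma> - 1) * 1 * (ux p + vy p) = 0)"
    proof (rule exI[where x="\<lambda>p. 0"], rule exI[where x="\<lambda>p. 0"], rule exI[where x="\<lambda>p. 0"], rule exI[where x="\<lambda>p. 0"], rule exI[where x="\<lambda>p. 0"], rule exI[where x="\<lambda>p. 0"], rule exI[where x="\<lambda>p. - (e * real n * c * cos (real n * (fst (snd p) - c * fst p)))"], rule exI[where x="\<lambda>p. e * real n * cos (real n * (fst (snd p) - c * fst p))"], rule exI[where x="\<lambda>p. 0"], rule exI[where x="\<lambda>p. 0"], rule exI[where x="\<lambda>p. 0"], rule exI[where x="\<lambda>p. 0"], intro conjI pd3_const pd3_W ballI)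
    qed (auto simp: algebra_simps)
  qed
qed

theorem theorem1:
  fixes s \<gamma> :: real
  assumes "s > 2" and "\<gamma> > 1"
  shows "\<exists>T>0. \<exists>R>0. \<exists>\<epsilon>>0. \<forall>\<delta>>0. \<exists>U V.
           gas_sol s \<gamma> T U \<and> gas_sol s \<gamma> T V \<and>
           Hs4 s (state_at U 0) \<le> R \<and> Hs4 s (state_at V 0) \<le> R \<and>
           Hs4 s (sub4 (state_at U 0) (state_at V 0)) < \<delta> \<and>
           (\<exists>t\<in>{0..T}. Hs4 s (sub4 (state_at U t) (state_at V t)) \<ge> \<epsilon>)"
proof -
  have main: "\<exists>U V.
           gas_sol s \<gamma> 1 U \<and> gas_sol s \<gamma> 1 V \<and>
           Hs4 s (state_at U 0) \<le> 4*pi \<and> Hs4 s (state_at V 0) \<le> 4*pi \<and>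
           Hs4 s (sub4 (state_at U 0) (state_at V 0)) < \<delta> \<and>
           (\<exists>t\<in>{0..1}. Hs4 s (sub4 (state_at U t) (state_at V t)) \<ge> 1)" if \<delta>: "\<delta> > 0" for \<delta>
  proof -
  obtain n :: nat where nb: "2*pi^2/\<delta> + 4 < real n" using reals_Archimedean2 by blast
  have n4: "real n > 4" using nb \<delta> by (smt (verit) divide_pos_pos pi_gt3 zero_less_power)
  then have n: "n > 0" by simp
  define a where "a = pi / real n"
  define w where "w = (1 + real n ^ 2) powr s"
  define e where "e = (1 + real n ^ 2) powr (- s / 2)"
  have nz: "1 + real n ^ 2 \<noteq> 0" by (smt (verit) zero_le_power2)
  have e0: "e > 0" unfolding e_def using nz by simp
  have we: "w * e^2 = 1"
  proof -
    have "e^2 = (1 + real n ^ 2) powr (- s)"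
      unfolding e_def by (simp add: power2_eq_square powr_add[symmetric])
    with nz show ?thesis unfolding w_def by (simp add: powr_add[symmetric])
  qed
  have e1: "e \<le> 1"
  proof -
    have "(1 + real n ^ 2) powr (- s / 2) \<le> 1"
      using \<open>s > 2\<close> powr_mono2'[of "- s / 2" 1 "1 + real n ^ 2"] by simp
    then show ?thesis unfolding e_def .
  qed
  have a0: "a > 0" and a1: "a \<le> 1" unfolding a_def using n4 pi_less_4 by auto
  have na: "real n * a = pi" unfolding a_def using n by simp
  have ad: "2 * pi * a < \<delta>"
  proof -
    have "2*pi^2/\<delta> < real n" using nb by simp
    then have "2*pi^2 < real n * \<delta>" using \<delta> by (simp add: field_simps)
    then show ?thesis unfolding a_def using n by (simp add: field_simps power2_eq_square)
  qed
  have "Ht s n 0 0 e = 2 * pi^2 * (w * e^2)" "Ht s n 0 0 (2 * e) = 8 * pi^2 * (w * e^2)"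
    unfolding Ht_def w_def[symmetric] by (simp_all add: power_mult_distrib)
  then have Hte: "Ht s n 0 0 e = 2 * pi^2" "Ht s n 0 0 (2 * e) = 8 * pi^2"
    unfolding we by simp_all
  have Ht1: "Ht s n A 0 0 = 4 * pi^2 * A^2" for A unfolding Ht_def by simp
  have G0: "gas_sol s \<gamma> 1 (W n e 0)" by (rule gas_W) (use n e0 e1 in auto)
  have G1: "gas_sol s \<gamma> 1 (W n e a)" by (rule gas_W) (use n e0 e1 a0 a1 in auto)
  have sq: "sqrt x \<le> 4 * pi" if "x \<le> 16 * pi^2" for x
    by (rule real_le_lsqrt) (use that in \<open>auto simp: power_mult_distrib\<close>)
  have G2: "Hs4 s (state_at (W n e 0) 0) \<le> 4 * pi"
    unfolding state_W Hs4_trig(1)[OF n] by (rule sq) (simp add: Hte Ht1)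
  have "a^2 \<le> 1" using a0 a1 by (simp add: power_le_one)
  then have G3: "Hs4 s (state_at (W n e a) 0) \<le> 4 * pi"
    unfolding state_W Hs4_trig(1)[OF n] by (intro sq) (simp add: Hte Ht1)
  have "Hs4 s (sub4 (state_at (W n e 0) 0) (state_at (W n e a) 0)) = sqrt ((2 * pi * a)^2)"
    unfolding state_W sub4_trig Hs4_trig(1)[OF n] by (simp add: Hte Ht1 power_mult_distrib)
  then have G4: "Hs4 s (sub4 (state_at (W n e 0) 0) (state_at (W n e a) 0)) < \<delta>"
    using a0 ad by simp
  have "Hs4 s (sub4 (state_at (W n e 0) 1) (state_at (W n e a) 1)) = sqrt (8*pi^2 + 4*pi^2*a^2)"
    unfolding state_W sub4_trig Hs4_trig(1)[OF n] using na by (simp add: Hte Ht1)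
  moreover have "1 \<le> sqrt (8*pi^2 + 4*pi^2*a^2)"
  proof (rule real_le_rsqrt)
    have "1 \<le> pi^2" using pi_gt3 by (intro one_le_power) simp
    moreover have "0 \<le> 4*pi^2*a^2" by simp
    moreover have "(1::real)^2 = 1" by simp
    ultimately show "1^2 \<le> 8*pi^2 + 4*pi^2*a^2" by linarith
  qed
  ultimately have G5: "\<exists>t\<in>{0..1}. 1 \<le> Hs4 s (sub4 (state_at (W n e 0) t) (state_at (W n e a) t))"
    by (intro bexI[of _ 1]) auto
    show ?thesis
      by (rule exI[of _ "W n e 0"], rule exI[of _ "W n e a"]) (intro conjI G0 G1 G2 G3 G4 G5)
  qed
  show ?thesis
  proof (rule exI[of _ "1::real"], rule conjI, simp, rule exI[of _ "4*pi"], rule conjI, simp,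
      rule exI[of _ "1::real"], rule conjI, simp, intro allI impI)
    fix \<delta> :: real assume "\<delta> > 0"
    then show "\<exists>U V.
           gas_sol s \<gamma> 1 U \<and> gas_sol s \<gamma> 1 V \<and>
           Hs4 s (state_at U 0) \<le> 4*pi \<and> Hs4 s (state_at V 0) \<le> 4*pi \<and>
           Hs4 s (sub4 (state_at U 0) (state_at V 0)) < \<delta> \<and>
           (\<exists>t\<in>{0..1}. Hs4 s (sub4 (state_at U t) (state_at V t)) \<ge> 1)" by (rule main)
  qed
qed

end
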